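(* Let $\eta^{ij}$ ($1\le i,j\le N$) be a constant nondegenerate symmetric matrix, let $c\neq 0$ be a constant, set $L=N$ and $\mu^{ij}=c\,\eta^{ij}$, and let $\Phi(u^1,\dots,u^N)$ be a function with $\psi_\alpha=\partial\Phi/\partial u^\alpha$, $1\le\alpha\le N$. Then the system $$\sum_{\alpha,\beta=1}^N\mu^{\alpha\beta}\Big(\frac{\partial^2\psi_\alpha}{\partial u^i\partial u^k}\frac{\partial^2\psi_\beta}{\partial u^j\partial u^l}-\frac{\partial^2\psi_\alpha}{\partial u^i\partial u^l}\frac{\partial^2\psi_\beta}{\partial u^j\partial u^k}\Big)=0\quad(\text{all } i,j,k,l)$$ (Gauss equations) and the system $$\sum_{i,j=1}^N\eta^{ij}\Big(\frac{\partial^2\psi_\alpha}{\partial u^i\partial u^k}\frac{\partial^2\psi_\beta}{\partial u^j\partial u^l}-\frac{\partial^2\psi_\alpha}{\partial u^i\partial u^l}\frac{\partial^2\psi_\beta}{\partial u^j\partial u^k}\Big)=0\quad(\text{all } \alpha,\beta,k,l)$$ (Ricci equations) coincide with each other, and both coincide with the associativity equations $$\sum_{i,j=1}^N\eta^{ij}\Big(\frac{\partial^3\Phi}{\partial u^i\partial u^m\partial u^k}\frac{\partial^3\Phi}{\partial u^j\partial u^n\partial u^l}-\frac{\partial^3\Phi}{\partial u^i\partial u^m\partial u^l}\frac{\partial^3\Phi}{\partial u^j\partial u^n\partial u^k}\Big)=0\quad\text{for all } m,n,k,l.$$ *)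

theory Defs
  imports "HOL-Analysis.Analysis"
begin

text \<open>Coordinates u = (u^1,...,u^N) are vectors in real^'n; the index set is the finite type 'n,
  so N = CARD('n).\<close>

definition pd :: "'n::finite \<Rightarrow> (real^'n \<Rightarrow> real) \<Rightarrow> real^'n \<Rightarrow> real" where
  "pd i f x = deriv (\<lambda>t. f (x + t *\<^sub>R axis i 1)) 0"

definition C1_partial_on :: "(real^'n::finite) set \<Rightarrow> (real^'n \<Rightarrow> real) \<Rightarrow> bool" where
  "C1_partial_on U f \<longleftrightarrow> continuous_on U f \<and>
     (\<forall>i. \<forall>x\<in>U. ((\<lambda>t. f (x + t *\<^sub>R axis i 1)) has_real_derivative pd i f x) (at 0)) \<and>
     (\<forall>i. continuous_on U (pd i f))"

definition C3_on :: "(real^'n::finite) set \<Rightarrow> (real^'n \<Rightarrow> real) \<Rightarrow> bool" where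
  "C3_on U f \<longleftrightarrow> C1_partial_on U f \<and> (\<forall>i. C1_partial_on U (pd i f)) \<and>
     (\<forall>i j. C1_partial_on U (pd j (pd i f)))"

end

theory Submission
  imports Defs
begin
lemma pd_deriv_at:
  fixes f :: "real^'n::finite \<Rightarrow> real"
  assumes d: "\<forall>y\<in>U. ((\<lambda>t. f (y + t *\<^sub>R axis i 1)) has_real_derivative pd i f y) (at 0)"
    and y: "y + s *\<^sub>R axis i 1 \<in> U"
  shows "((\<lambda>t. f (y + t *\<^sub>R axis i 1)) has_real_derivative pd i f (y + s *\<^sub>R axis i 1)) (at s)"
proof -
  let ?z = "y + s *\<^sub>R axis i 1"
  have "((\<lambda>t. f (?z + t *\<^sub>R axis i 1)) has_real_derivative pd i f ?z) (at 0)"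
    using d y by blast
  then have "((\<lambda>t. f (?z + (t - s) *\<^sub>R axis i 1)) has_real_derivative pd i f ?z) (at (0 + s))"
    using DERIV_shift[where f="\<lambda>t. f (?z + (t - s) *\<^sub>R axis i 1)" and x=0 and z=s]
    by simp
  moreover have "(\<lambda>t. f (?z + (t - s) *\<^sub>R axis i 1)) = (\<lambda>t. f (y + t *\<^sub>R axis i 1))"
    by (rule ext) (simp add: algebra_simps)
  ultimately show ?thesis by simp
qed

lemma delta_mvt:
  fixes g :: "real^'n::finite \<Rightarrow> real"
  assumes d1: "\<forall>i. \<forall>y\<in>U. ((\<lambda>t. g (y + t *\<^sub>R axis i 1)) has_real_derivative pd i g y) (at 0)"
    and d2: "\<forall>i j. \<forall>y\<in>U. ((\<lambda>t. pd i g (y + t *\<^sub>R axis j 1)) has_real_derivative pd j (pd i g) y) (at 0)"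
    and h: "h > 0" and sub: "cball x (2*h) \<subseteq> U"
  shows "\<exists>s t. 0 < s \<and> s < h \<and> 0 < t \<and> t < h \<and>
     g (x + h *\<^sub>R axis a 1 + h *\<^sub>R axis b 1) - g (x + h *\<^sub>R axis a 1) - g (x + h *\<^sub>R axis b 1) + g x
      = h * h * pd b (pd a g) (x + s *\<^sub>R axis a 1 + t *\<^sub>R axis b 1)"
proof -
  have inU: "x + s *\<^sub>R axis a 1 + t *\<^sub>R axis b 1 \<in> U" if "0 \<le> s" "s \<le> h" "0 \<le> t" "t \<le> h" for s t
  proof -
    have "norm (s *\<^sub>R axis a 1 + t *\<^sub>R axis b 1 :: real^'n) \<le> norm (s *\<^sub>R axis a 1 :: real^'n) + norm (t *\<^sub>R axis b 1 :: real^'n)"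
      by (rule norm_triangle_ineq)
    also have "\<dots> = \<bar>s\<bar> + \<bar>t\<bar>" by (simp add: norm_axis_1)
    also have "\<dots> \<le> 2 * h" using that by simp
    finally have "dist (x + s *\<^sub>R axis a 1 + t *\<^sub>R axis b 1) x \<le> 2 * h"
      by (simp add: dist_norm add.assoc)
    then show ?thesis using sub by (auto simp: dist_commute)
  qed
  define \<phi> where "\<phi> s = g (x + h *\<^sub>R axis b 1 + s *\<^sub>R axis a 1) - g (x + s *\<^sub>R axis a 1)" for s
  have "(\<phi> has_real_derivative (pd a g (x + h *\<^sub>R axis b 1 + s *\<^sub>R axis a 1) - pd a g (x + s *\<^sub>R axis a 1))) (at s)"
    if "0 \<le> s" "s \<le> h" for s
  proof -
    have A: "x + h *\<^sub>R axis b 1 + s *\<^sub>R axis a 1 \<in> U"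
      using inU[of s h] that h by (simp add: algebra_simps)
    have B: "x + s *\<^sub>R axis a 1 \<in> U"
      using inU[of s 0] that h by simp
    show ?thesis unfolding \<phi>_def
      by (intro DERIV_diff pd_deriv_at[where U=U]) (use d1 A B in auto)
  qed
  from MVT2[OF h this] obtain s where s: "0 < s" "s < h"
    and s_eq: "\<phi> h - \<phi> 0 = (h - 0) * (pd a g (x + h *\<^sub>R axis b 1 + s *\<^sub>R axis a 1) - pd a g (x + s *\<^sub>R axis a 1))"
    by blast
  define \<theta> where "\<theta> t = pd a g ((x + s *\<^sub>R axis a 1) + t *\<^sub>R axis b 1)" for t
  have "(\<theta> has_real_derivative pd b (pd a g) ((x + s *\<^sub>R axis a 1) + t *\<^sub>R axis b 1)) (at t)"
    if "0 \<le> t" "t \<le> h" for t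
    unfolding \<theta>_def
    by (rule pd_deriv_at[where U=U]) (use d2 inU[of s t] that s in auto)
  from MVT2[OF h this] obtain t where t: "0 < t" "t < h"
    and t_eq: "\<theta> h - \<theta> 0 = (h - 0) * pd b (pd a g) ((x + s *\<^sub>R axis a 1) + t *\<^sub>R axis b 1)"
    by blast
  have "g (x + h *\<^sub>R axis a 1 + h *\<^sub>R axis b 1) - g (x + h *\<^sub>R axis a 1) - g (x + h *\<^sub>R axis b 1) + g x
      = \<phi> h - \<phi> 0" unfolding \<phi>_def by (simp add: algebra_simps)
  also have "\<dots> = h * (\<theta> h - \<theta> 0)" using s_eq unfolding \<theta>_def by (simp add: algebra_simps)
  also have "\<dots> = h * h * pd b (pd a g) (x + s *\<^sub>R axis a 1 + t *\<^sub>R axis b 1)"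
    using t_eq by simp
  finally show ?thesis using s t by blast
qed

lemma clairaut:
  fixes g :: "real^'n::finite \<Rightarrow> real"
  assumes U: "open U" and x: "x \<in> U"
    and d1: "\<forall>i. \<forall>y\<in>U. ((\<lambda>t. g (y + t *\<^sub>R axis i 1)) has_real_derivative pd i g y) (at 0)"
    and d2: "\<forall>i j. \<forall>y\<in>U. ((\<lambda>t. pd i g (y + t *\<^sub>R axis j 1)) has_real_derivative pd j (pd i g) y) (at 0)"
    and cont: "\<forall>i j. continuous_on U (pd j (pd i g))"
  shows "pd b (pd a g) x = pd a (pd b g) x"
proof (rule ccontr)
  assume ne: "pd b (pd a g) x \<noteq> pd a (pd b g) x"
  define e where "e = \<bar>pd b (pd a g) x - pd a (pd b g) x\<bar> / 2"
  have e: "e > 0" using ne by (simp add: e_def)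
  have c1: "isCont (pd b (pd a g)) x" and c2: "isCont (pd a (pd b g)) x"
    using cont U x continuous_on_eq_continuous_at by blast+
  obtain d1' where d1': "d1' > 0" "\<And>y. dist y x < d1' \<Longrightarrow> dist (pd b (pd a g) y) (pd b (pd a g) x) < e"
    using c1 e unfolding continuous_at_eps_delta by blast
  obtain d2' where d2': "d2' > 0" "\<And>y. dist y x < d2' \<Longrightarrow> dist (pd a (pd b g) y) (pd a (pd b g) x) < e"
    using c2 e unfolding continuous_at_eps_delta by blast
  obtain r where r: "r > 0" "ball x r \<subseteq> U" using U x open_contains_ball by blast
  define h where "h = min r (min d1' d2') / 3"
  have h: "h > 0" using r d1' d2' by (simp add: h_def)
  have "2*h < r" using r d1' d2' unfolding h_def by linarith
  then have "cball x (2*h) \<subseteq> ball x r" by (simp add: cball_subset_ball_iff)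
  then have sub: "cball x (2*h) \<subseteq> U" using r(2) by (rule subset_trans)
  have close: "dist (x + s *\<^sub>R axis a 1 + t *\<^sub>R axis b 1) x < 3 * h"
    if "0 < s" "s < h" "0 < t" "t < h" for s t a b
  proof -
    have "norm (s *\<^sub>R axis a 1 + t *\<^sub>R axis b 1 :: real^'n) \<le> norm (s *\<^sub>R axis a 1 :: real^'n) + norm (t *\<^sub>R axis b 1 :: real^'n)"
      by (rule norm_triangle_ineq)
    also have "\<dots> = \<bar>s\<bar> + \<bar>t\<bar>" by (simp add: norm_axis_1)
    also have "\<dots> < 3 * h" using that by simp
    finally show ?thesis by (simp add: dist_norm add.assoc)
  qed
  obtain s1 t1 where st1: "0 < s1" "s1 < h" "0 < t1" "t1 < h" and
    eq1: "g (x + h *\<^sub>R axis a 1 + h *\<^sub>R axis b 1) - g (x + h *\<^sub>R axis a 1) - g (x + h *\<^sub>R axis b 1) + g x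
      = h * h * pd b (pd a g) (x + s1 *\<^sub>R axis a 1 + t1 *\<^sub>R axis b 1)"
    using delta_mvt[OF d1 d2 h sub, of a b] by blast
  obtain s2 t2 where st2: "0 < s2" "s2 < h" "0 < t2" "t2 < h" and
    eq2: "g (x + h *\<^sub>R axis b 1 + h *\<^sub>R axis a 1) - g (x + h *\<^sub>R axis b 1) - g (x + h *\<^sub>R axis a 1) + g x
      = h * h * pd a (pd b g) (x + s2 *\<^sub>R axis b 1 + t2 *\<^sub>R axis a 1)"
    using delta_mvt[OF d1 d2 h sub, of b a] by blast
  have P: "x + h *\<^sub>R axis b 1 + h *\<^sub>R axis a 1 = x + h *\<^sub>R axis a 1 + h *\<^sub>R axis b 1"
    by (simp add: algebra_simps)
  have "h * h * pd b (pd a g) (x + s1 *\<^sub>R axis a 1 + t1 *\<^sub>R axis b 1)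
     = h * h * pd a (pd b g) (x + s2 *\<^sub>R axis b 1 + t2 *\<^sub>R axis a 1)"
    using eq1 eq2[unfolded P] by linarith
  then have eqp: "pd b (pd a g) (x + s1 *\<^sub>R axis a 1 + t1 *\<^sub>R axis b 1)
     = pd a (pd b g) (x + s2 *\<^sub>R axis b 1 + t2 *\<^sub>R axis a 1)"
    using h by (metis mult_cancel_left mult_pos_pos less_irrefl)
  have "3 * h \<le> d1'" "3 * h \<le> d2'" unfolding h_def by linarith+
  then have "dist (pd b (pd a g) (x + s1 *\<^sub>R axis a 1 + t1 *\<^sub>R axis b 1)) (pd b (pd a g) x) < e"
    "dist (pd a (pd b g) (x + s2 *\<^sub>R axis b 1 + t2 *\<^sub>R axis a 1)) (pd a (pd b g) x) < e"
    using d1'(2)[OF less_le_trans[OF close[OF st1] \<open>3 * h \<le> d1'\<close>]]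
      d2'(2)[OF less_le_trans[OF close[OF st2] \<open>3 * h \<le> d2'\<close>]] by blast+
  then have "\<bar>pd b (pd a g) x - pd a (pd b g) x\<bar> < 2 * e"
    using eqp unfolding dist_real_def by (simp add: abs_diff_less_iff)
  then show False unfolding e_def by simp
qed

lemma pd_local:
  fixes f g :: "real^'n::finite \<Rightarrow> real"
  assumes U: "open U" and x: "x \<in> U" and eq: "\<And>y. y \<in> U \<Longrightarrow> f y = g y"
    and df: "((\<lambda>t. f (x + t *\<^sub>R axis i 1)) has_real_derivative pd i f x) (at 0)"
    and dg: "((\<lambda>t. g (x + t *\<^sub>R axis i 1)) has_real_derivative pd i g x) (at 0)"
  shows "pd i f x = pd i g x"
proof -
  let ?S = "{t::real. x + t *\<^sub>R axis i 1 \<in> U}"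
  have "?S = (\<lambda>t. x + t *\<^sub>R axis i 1) -` U" by auto
  moreover have "open ((\<lambda>t::real. x + t *\<^sub>R axis i 1) -` U)"
    by (rule open_vimage[OF U]) (intro continuous_intros)
  ultimately have oS: "open ?S" by simp
  have "0 \<in> ?S" using x by simp
  have "((\<lambda>t. g (x + t *\<^sub>R axis i 1)) has_real_derivative pd i f x) (at 0)"
    by (rule has_field_derivative_transform_within_open[OF df oS \<open>0 \<in> ?S\<close>]) (simp add: eq)
  then show ?thesis using dg DERIV_unique by blast
qed

theorem mainTheorem3:
  fixes \<eta> :: "real^'n::finite^'n" and c :: real and \<Phi> :: "real^'n \<Rightarrow> real"
    and U :: "(real^'n) set"
  assumes sym: "transpose \<eta> = \<eta>"
    and nondeg: "det \<eta> \<noteq> 0"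
    and c: "c \<noteq> 0"
    and U: "open U"
    and smooth: "C3_on U \<Phi>"
  defines "\<mu> \<equiv> c *\<^sub>R \<eta>"
  defines "\<psi> \<equiv> (\<lambda>\<alpha>. pd \<alpha> \<Phi>)"
  assumes x: "x \<in> U"
  shows
    "((\<forall>i j k l. (\<Sum>\<alpha>\<in>UNIV. \<Sum>\<beta>\<in>UNIV. \<mu> $ \<alpha> $ \<beta> *
          (pd i (pd k (\<psi> \<alpha>)) x * pd j (pd l (\<psi> \<beta>)) x
           - pd i (pd l (\<psi> \<alpha>)) x * pd j (pd k (\<psi> \<beta>)) x)) = 0)
      \<longleftrightarrow>
      (\<forall>\<alpha> \<beta> k l. (\<Sum>i\<in>UNIV. \<Sum>j\<in>UNIV. \<eta> $ i $ j *
          (pd i (pd k (\<psi> \<alpha>)) x * pd j (pd l (\<psi> \<beta>)) x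
           - pd i (pd l (\<psi> \<alpha>)) x * pd j (pd k (\<psi> \<beta>)) x)) = 0))
     \<and>
     ((\<forall>\<alpha> \<beta> k l. (\<Sum>i\<in>UNIV. \<Sum>j\<in>UNIV. \<eta> $ i $ j *
          (pd i (pd k (\<psi> \<alpha>)) x * pd j (pd l (\<psi> \<beta>)) x
           - pd i (pd l (\<psi> \<alpha>)) x * pd j (pd k (\<psi> \<beta>)) x)) = 0)
      \<longleftrightarrow>
      (\<forall>m n k l. (\<Sum>i\<in>UNIV. \<Sum>j\<in>UNIV. \<eta> $ i $ j *
          (pd i (pd m (pd k \<Phi>)) x * pd j (pd n (pd l \<Phi>)) x
           - pd i (pd m (pd l \<Phi>)) x * pd j (pd n (pd k \<Phi>)) x)) = 0))"
proof -
  have C0: "C1_partial_on U \<Phi>" and C1: "\<And>i. C1_partial_on U (pd i \<Phi>)"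
    and C2: "\<And>i j. C1_partial_on U (pd j (pd i \<Phi>))"
    using smooth unfolding C3_on_def by auto
  define T where "T a b c' = pd a (pd b (pd c' \<Phi>)) x" for a b c'
  have S1: "pd b (pd c' \<Phi>) y = pd c' (pd b \<Phi>) y" if "y \<in> U" for b c' y
    by (rule clairaut[OF U that]) (use C0 C1 in \<open>auto simp: C1_partial_on_def\<close>)
  have S2: "T a b c' = T b a c'" for a b c'
    unfolding T_def
    by (rule clairaut[OF U x]) (use C1 C2 in \<open>auto simp: C1_partial_on_def\<close>)
  have S3: "T a b c' = T a c' b" for a b c'
    unfolding T_def
    by (rule pd_local[OF U x]) (use S1 C2 x in \<open>auto simp: C1_partial_on_def\<close>)
  have R1: "pd i (pd k (\<psi> \<alpha>)) x = T i k \<alpha>" for i k \<alpha>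
    unfolding T_def \<psi>_def by simp
  have R2: "pd i (pd m (pd k \<Phi>)) x = T i m k" for i m k
    unfolding T_def by simp
  have TT: "T i k \<alpha> = T \<alpha> k i" for i k \<alpha>
    by (metis S2 S3)
  have G: "(\<Sum>\<alpha>\<in>UNIV. \<Sum>\<beta>\<in>UNIV. \<mu> $ \<alpha> $ \<beta> *
          (pd i (pd k (\<psi> \<alpha>)) x * pd j (pd l (\<psi> \<beta>)) x
           - pd i (pd l (\<psi> \<alpha>)) x * pd j (pd k (\<psi> \<beta>)) x))
      = c * (\<Sum>\<alpha>\<in>UNIV. \<Sum>\<beta>\<in>UNIV. \<eta> $ \<alpha> $ \<beta> *
          (pd \<alpha> (pd k (\<psi> i)) x * pd \<beta> (pd l (\<psi> j)) x
           - pd \<alpha> (pd l (\<psi> i)) x * pd \<beta> (pd k (\<psi> j)) x))" for i j k l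
    unfolding R1 \<mu>_def
    by (simp add: sum_distrib_left mult.assoc TT[of i] TT[of j])
  have H: "(\<Sum>i\<in>UNIV. \<Sum>j\<in>UNIV. \<eta> $ i $ j *
          (pd i (pd k (\<psi> \<alpha>)) x * pd j (pd l (\<psi> \<beta>)) x
           - pd i (pd l (\<psi> \<alpha>)) x * pd j (pd k (\<psi> \<beta>)) x))
      = (\<Sum>i\<in>UNIV. \<Sum>j\<in>UNIV. \<eta> $ i $ j *
          (pd i (pd \<alpha> (pd k \<Phi>)) x * pd j (pd \<beta> (pd l \<Phi>)) x
           - pd i (pd \<alpha> (pd l \<Phi>)) x * pd j (pd \<beta> (pd k \<Phi>)) x))" for \<alpha> \<beta> k l
    unfolding R1 R2 using S3 by simp
  show ?thesis
    unfolding G H using c by auto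
qed

end
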